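(* With respect to the set of pure Nash equilibrium outcomes, the mechanism $\mathcal{CUDD}$ satisfies symmetry, invariance with respect to repetition of alternatives (IRA), and existence of a Pareto efficient equilibrium (for every collection $A$, some pure Nash equilibrium outcome of $\Gamma_{\mathcal{CUDD}}(A)$ is Pareto efficient).
   Context: Two players bargain over a collection (multiset) $A=(a^k)_{k\in[n]}$, $a^k\in[0,1]^2$, $a^k_i$ being player $i$'s utility; players are risk neutral and outcomes are expected-utility vectors; $NEO(A)$ denotes the set of pure Nash equilibrium outcomes. Mechanism $\mathcal{CUDD}$: each player $i$ submits $(g_i,d_i)\in[n]^2$; if $g_1=g_2$ the chosen index is $g_1$, otherwise it is uniform over $\{d_1,d_2\}$. Symmetry: a collection is symmetric if for all $x_1,x_2$, $|\{k:a^k=(x_1,x_2)\}|=|\{k:a^k=(x_2,x_1)\}|$; the mechanism is symmetric if $NEO(A)$ is closed under swapping coordinates for every symmetric $A$. IRA: for $j\in[n]$ let $(A,j)=(a_1,\dots,a_n,a_j)$; IRA means $NEO(A)=NEO((A,j))$ for all $A,j$. An outcome $x$ is Pareto efficient if there is no $a\in A$ with $a_1>x_1$ and $a_2>x_2$. *)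

theory Defs
  imports Main "HOL-Library.Multiset" Complex_Main
begin

(* A collection A = (a^1,...,a^n) is a list of utility pairs; index set [n] is
   rendered 0-based as {0..<length A}. *)
type_synonym collection = "(real \<times> real) list"

definition is_collection :: "collection \<Rightarrow> bool" where
  "is_collection A \<longleftrightarrow> A \<noteq> [] \<and>
     (\<forall>a\<in>set A. 0 \<le> fst a \<and> fst a \<le> 1 \<and> 0 \<le> snd a \<and> snd a \<le> 1)"

type_synonym strategy = "nat \<times> nat"

definition strategies :: "collection \<Rightarrow> strategy set" where
  "strategies A = {0..<length A} \<times> {0..<length A}"

(* expected-utility outcome of mechanism CUDD *)
definition cudd_outcome :: "collection \<Rightarrow> strategy \<Rightarrow> strategy \<Rightarrow> real \<times> real" where
  "cudd_outcome A s1 s2 =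
     (if fst s1 = fst s2 then A ! fst s1
      else ((fst (A ! snd s1) + fst (A ! snd s2)) / 2,
            (snd (A ! snd s1) + snd (A ! snd s2)) / 2))"

definition is_pure_NE :: "collection \<Rightarrow> strategy \<Rightarrow> strategy \<Rightarrow> bool" where
  "is_pure_NE A s1 s2 \<longleftrightarrow> s1 \<in> strategies A \<and> s2 \<in> strategies A \<and>
     (\<forall>t\<in>strategies A. fst (cudd_outcome A t s2) \<le> fst (cudd_outcome A s1 s2)) \<and>
     (\<forall>t\<in>strategies A. snd (cudd_outcome A s1 t) \<le> snd (cudd_outcome A s1 s2))"

definition NEO :: "collection \<Rightarrow> (real \<times> real) set" where
  "NEO A = {cudd_outcome A s1 s2 | s1 s2. is_pure_NE A s1 s2}"

definition swap_pair :: "real \<times> real \<Rightarrow> real \<times> real" where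
  "swap_pair x = (snd x, fst x)"

definition symmetric_collection :: "collection \<Rightarrow> bool" where
  "symmetric_collection A \<longleftrightarrow>
     (\<forall>x1 x2. count (mset A) (x1, x2) = count (mset A) (x2, x1))"

definition mechanism_symmetric :: bool where
  "mechanism_symmetric \<longleftrightarrow>
     (\<forall>A. is_collection A \<and> symmetric_collection A \<longrightarrow>
        (\<forall>x\<in>NEO A. swap_pair x \<in> NEO A))"

definition mechanism_IRA :: bool where
  "mechanism_IRA \<longleftrightarrow>
     (\<forall>A j. is_collection A \<and> j < length A \<longrightarrow> NEO A = NEO (A @ [A ! j]))"

definition pareto_efficient :: "collection \<Rightarrow> real \<times> real \<Rightarrow> bool" where
  "pareto_efficient A x \<longleftrightarrow> \<not> (\<exists>a\<in>set A. fst a > fst x \<and> snd a > snd x)"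

definition pareto_efficient_equilibrium_exists :: bool where
  "pareto_efficient_equilibrium_exists \<longleftrightarrow>
     (\<forall>A. is_collection A \<longrightarrow> (\<exists>x\<in>NEO A. pareto_efficient A x))"

end

theory Submission
  imports Defs
begin

definition M1 :: "(real \<times> real) set \<Rightarrow> real" where "M1 S = Max (fst ` S)"
definition m1 :: "(real \<times> real) set \<Rightarrow> real" where "m1 S = Min (fst ` S)"
definition M2 :: "(real \<times> real) set \<Rightarrow> real" where "M2 S = Max (snd ` S)"
definition m2 :: "(real \<times> real) set \<Rightarrow> real" where "m2 S = Min (snd ` S)"

definition mid :: "real \<times> real \<Rightarrow> real \<times> real \<Rightarrow> real \<times> real" where
  "mid a b = ((fst a + fst b) / 2, (snd a + snd b) / 2)"

definition F :: "(real \<times> real) set \<Rightarrow> (real \<times> real) set" where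
  "F S = {x\<in>S. M1 S + m1 S \<le> 2 * fst x \<and> M2 S + m2 S \<le> 2 * snd x} \<union>
         {mid a b | a b. a \<in> S \<and> b \<in> S \<and> fst a = M1 S \<and> snd b = M2 S}"

lemma F_agree: "x \<in> S \<Longrightarrow> M1 S + m1 S \<le> 2 * fst x \<Longrightarrow> M2 S + m2 S \<le> 2 * snd x \<Longrightarrow> x \<in> F S"
  unfolding F_def by blast
lemma F_mid: "a \<in> S \<Longrightarrow> b \<in> S \<Longrightarrow> fst a = M1 S \<Longrightarrow> snd b = M2 S \<Longrightarrow> mid a b \<in> F S"
  unfolding F_def by blast

lemma bounds:
  assumes "finite S" "x \<in> S"
  shows "fst x \<le> M1 S" "m1 S \<le> fst x" "snd x \<le> M2 S" "m2 S \<le> snd x"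
  using assms by (auto simp: M1_def m1_def M2_def m2_def)

lemma attained:
  assumes "finite S" "S \<noteq> {}"
  shows "\<exists>a\<in>S. fst a = M1 S" "\<exists>a\<in>S. fst a = m1 S"
        "\<exists>a\<in>S. snd a = M2 S" "\<exists>a\<in>S. snd a = m2 S"
proof -
  have f1: "finite (fst ` S)" "fst ` S \<noteq> {}" "finite (snd ` S)" "snd ` S \<noteq> {}"
    using assms by auto
  show "\<exists>a\<in>S. fst a = M1 S" using Max_in[OF f1(1,2)] unfolding M1_def by (metis imageE)
  show "\<exists>a\<in>S. fst a = m1 S" using Min_in[OF f1(1,2)] unfolding m1_def by (metis imageE)
  show "\<exists>a\<in>S. snd a = M2 S" using Max_in[OF f1(3,4)] unfolding M2_def by (metis imageE)
  show "\<exists>a\<in>S. snd a = m2 S" using Min_in[OF f1(3,4)] unfolding m2_def by (metis imageE)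
qed

lemma idx_attained:
  assumes "A \<noteq> []"
  shows "\<exists>i<length A. fst (A!i) = M1 (set A)" "\<exists>i<length A. fst (A!i) = m1 (set A)"
        "\<exists>i<length A. snd (A!i) = M2 (set A)" "\<exists>i<length A. snd (A!i) = m2 (set A)"
proof -
  have f: "finite (set A)" "set A \<noteq> {}" using assms by auto
  show "\<exists>i<length A. fst (A!i) = M1 (set A)" using attained(1)[OF f] by (metis in_set_conv_nth)
  show "\<exists>i<length A. fst (A!i) = m1 (set A)" using attained(2)[OF f] by (metis in_set_conv_nth)
  show "\<exists>i<length A. snd (A!i) = M2 (set A)" using attained(3)[OF f] by (metis in_set_conv_nth)
  show "\<exists>i<length A. snd (A!i) = m2 (set A)" using attained(4)[OF f] by (metis in_set_conv_nth)
qed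

lemma aux1: "(u::real) \<le> v \<Longrightarrow> u = (p + q) / 2 \<Longrightarrow> r \<le> q \<Longrightarrow> p + r \<le> 2 * v"
  by (simp add: field_simps)
lemma aux2: "(u::real) \<le> v \<Longrightarrow> u = (q + p) / 2 \<Longrightarrow> r \<le> q \<Longrightarrow> p + r \<le> 2 * v"
  by (simp add: field_simps)

lemma hl1: "(a::real) \<le> M \<Longrightarrow> M + m \<le> 2 * x \<Longrightarrow> (a + m) / 2 \<le> x" by (simp add: field_simps)
lemma hl2: "(a::real) \<le> M \<Longrightarrow> M + m \<le> 2 * x \<Longrightarrow> (m + a) / 2 \<le> x" by (simp add: field_simps)
lemma hl3: "(b::real) \<le> M \<Longrightarrow> b \<le> (M + b) / 2" by (simp add: field_simps)
lemma hl4: "(a::real) \<le> M \<Longrightarrow> (a + b) / 2 \<le> (M + b) / 2" by (simp add: field_simps)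
lemma hl5: "(b::real) \<le> M \<Longrightarrow> b \<le> (b + M) / 2" by (simp add: field_simps)
lemma hl6: "(a::real) \<le> M \<Longrightarrow> (b + a) / 2 \<le> (b + M) / 2" by (simp add: field_simps)

lemma NEO_sub:
  assumes "A \<noteq> []" "is_pure_NE A s1 s2"
  shows "cudd_outcome A s1 s2 \<in> F (set A)"
proof -
  obtain g1 d1 g2 d2 where s: "s1 = (g1,d1)" "s2 = (g2,d2)" by fastforce
  let ?n = "length A"
  have st: "s1 \<in> strategies A" "s2 \<in> strategies A" using assms(2) unfolding is_pure_NE_def by blast+
  have idx: "g1 < ?n" "d1 < ?n" "g2 < ?n" "d2 < ?n"
    using st s by (simp_all add: strategies_def)
  have NE1: "\<forall>t\<in>strategies A. fst (cudd_outcome A t s2) \<le> fst (cudd_outcome A s1 s2)"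
    using assms(2) unfolding is_pure_NE_def by blast
  have NE2: "\<forall>t\<in>strategies A. snd (cudd_outcome A s1 t) \<le> snd (cudd_outcome A s1 s2)"
    using assms(2) unfolding is_pure_NE_def by blast
  have P1: "fst (cudd_outcome A (g,d) s2) \<le> fst (cudd_outcome A s1 s2)" if "g < ?n" "d < ?n" for g d
  proof -
    have "(g,d) \<in> strategies A" using that by (simp add: strategies_def)
    thus ?thesis using NE1 by blast
  qed
  have P2: "snd (cudd_outcome A s1 (g,d)) \<le> snd (cudd_outcome A s1 s2)" if "g < ?n" "d < ?n" for g d
  proof -
    have "(g,d) \<in> strategies A" using that by (simp add: strategies_def)
    thus ?thesis using NE2 by blast
  qed
  have fin: "finite (set A)" by simp
  have inS: "\<And>i. i < ?n \<Longrightarrow> A!i \<in> set A" by simp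
  obtain iM where iM: "iM < ?n" "fst (A!iM) = M1 (set A)" using idx_attained[OF assms(1)] by blast
  obtain jM where jM: "jM < ?n" "snd (A!jM) = M2 (set A)" using idx_attained[OF assms(1)] by blast
  show ?thesis
  proof (cases "g1 = g2")
    case True
    have out: "cudd_outcome A s1 s2 = A!g1" using True s by (simp add: cudd_outcome_def)
    show ?thesis
    proof (cases "\<exists>g<?n. g \<noteq> g1")
      case True
      then obtain g where g: "g < ?n" "g \<noteq> g1" by blast
      have "fst (cudd_outcome A (g,iM) s2) \<le> fst (A!g1)" using P1[OF g(1) iM(1)] out by simp
      moreover have "fst (cudd_outcome A (g,iM) s2) = (M1 (set A) + fst (A!d2))/2"
        using g `g1 = g2` s iM by (simp add: cudd_outcome_def)
      moreover have "m1 (set A) \<le> fst (A!d2)" using bounds[OF fin inS[OF idx(4)]] by simp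
      ultimately have c1: "M1 (set A) + m1 (set A) \<le> 2 * fst (A!g1)" by (rule aux1)
      have "snd (cudd_outcome A s1 (g,jM)) \<le> snd (A!g1)" using P2[OF g(1) jM(1)] out by simp
      moreover have "snd (cudd_outcome A s1 (g,jM)) = (snd (A!d1) + M2 (set A))/2"
        using g s jM by (simp add: cudd_outcome_def)
      moreover have "m2 (set A) \<le> snd (A!d1)" using bounds[OF fin inS[OF idx(2)]] by simp
      ultimately have c2: "M2 (set A) + m2 (set A) \<le> 2 * snd (A!g1)" by (rule aux2)
      show ?thesis using F_agree[OF inS[OF idx(1)] c1 c2] out by simp
    next
      case False
      hence all: "\<And>i. i < ?n \<Longrightarrow> i = g1" by blast
      obtain i1 where i1: "i1 < ?n" "fst (A!i1) = m1 (set A)" using idx_attained[OF assms(1)] by blast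
      obtain i2 where i2: "i2 < ?n" "snd (A!i2) = m2 (set A)" using idx_attained[OF assms(1)] by blast
      have e: "M1 (set A) = fst (A!g1)" "m1 (set A) = fst (A!g1)" "M2 (set A) = snd (A!g1)" "m2 (set A) = snd (A!g1)"
        using all[OF iM(1)] all[OF jM(1)] all[OF i1(1)] all[OF i2(1)] iM(2) jM(2) i1(2) i2(2) by simp_all
      have c1: "M1 (set A) + m1 (set A) \<le> 2 * fst (A!g1)" using e(1,2) by linarith
      have c2: "M2 (set A) + m2 (set A) \<le> 2 * snd (A!g1)" using e(3,4) by linarith
      have "A!g1 \<in> F (set A)" using F_agree[OF inS[OF idx(1)] c1 c2] .
      thus ?thesis using out by simp
    qed
  next
    case False
    have out: "cudd_outcome A s1 s2 = mid (A!d1) (A!d2)"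
      using False s by (simp add: cudd_outcome_def mid_def)
    have "fst (cudd_outcome A (g1,iM) s2) \<le> fst (cudd_outcome A s1 s2)" using P1[OF idx(1) iM(1)] .
    hence "fst (A!iM) \<le> fst (A!d1)" using False s by (simp add: cudd_outcome_def)
    hence a: "fst (A!d1) = M1 (set A)" using iM bounds[OF fin inS[OF idx(2)]] by linarith
    have "snd (cudd_outcome A s1 (g2,jM)) \<le> snd (cudd_outcome A s1 s2)" using P2[OF idx(3) jM(1)] .
    hence "snd (A!jM) \<le> snd (A!d2)" using False s by (simp add: cudd_outcome_def)
    hence b: "snd (A!d2) = M2 (set A)" using jM bounds[OF fin inS[OF idx(4)]] by linarith
    show ?thesis using F_mid[OF inS[OF idx(2)] inS[OF idx(4)] a b] out by simp
  qed
qed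

lemma NEO_sup:
  assumes "A \<noteq> []" "x \<in> F (set A)"
  shows "x \<in> NEO A"
proof -
  let ?n = "length A"
  have fin: "finite (set A)" by simp
  have inS: "\<And>i. i < ?n \<Longrightarrow> A!i \<in> set A" by simp
  have agree: "x \<in> NEO A" if xS: "x \<in> set A" and c1: "M1 (set A) + m1 (set A) \<le> 2 * fst x"
      and c2: "M2 (set A) + m2 (set A) \<le> 2 * snd x" for x
  proof -
    obtain k where k: "k < ?n" "A!k = x" using xS by (auto simp: in_set_conv_nth)
    obtain i1 where i1: "i1 < ?n" "fst (A!i1) = m1 (set A)" using idx_attained[OF assms(1)] by blast
    obtain i2 where i2: "i2 < ?n" "snd (A!i2) = m2 (set A)" using idx_attained[OF assms(1)] by blast
    have NE: "is_pure_NE A (k,i2) (k,i1)"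
      unfolding is_pure_NE_def
    proof (intro conjI ballI)
      show "(k,i2) \<in> strategies A" "(k,i1) \<in> strategies A" using k i1 i2 by (auto simp: strategies_def)
    next
      fix t assume t: "t \<in> strategies A"
      obtain g d where gd: "t = (g,d)" "d < ?n" using t by (auto simp: strategies_def)
      have "fst (A!d) \<le> M1 (set A)" using bounds[OF fin inS[OF gd(2)]] by simp
      note b = this
      have R: "fst (cudd_outcome A (k, i2) (k, i1)) = fst x" using k by (simp add: cudd_outcome_def)
      show "fst (cudd_outcome A t (k, i1)) \<le> fst (cudd_outcome A (k, i2) (k, i1))"
      proof (cases "g = k")
        case True thus ?thesis using gd k R by (simp add: cudd_outcome_def)
      next
        case False
        hence "fst (cudd_outcome A t (k, i1)) = (fst (A!d) + m1 (set A)) / 2"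
          using gd i1 by (simp add: cudd_outcome_def)
        thus ?thesis using R hl1[OF b c1] by simp
      qed
    next
      fix t assume t: "t \<in> strategies A"
      obtain g d where gd: "t = (g,d)" "d < ?n" using t by (auto simp: strategies_def)
      have "snd (A!d) \<le> M2 (set A)" using bounds[OF fin inS[OF gd(2)]] by simp
      note b = this
      have R: "snd (cudd_outcome A (k, i2) (k, i1)) = snd x" using k by (simp add: cudd_outcome_def)
      show "snd (cudd_outcome A (k, i2) t) \<le> snd (cudd_outcome A (k, i2) (k, i1))"
      proof (cases "g = k")
        case True thus ?thesis using gd k R by (simp add: cudd_outcome_def)
      next
        case False
        hence "snd (cudd_outcome A (k, i2) t) = (m2 (set A) + snd (A!d)) / 2"
          using gd i2 by (simp add: cudd_outcome_def)
        thus ?thesis using R hl2[OF b c2] by simp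
      qed
    qed
    have "cudd_outcome A (k,i2) (k,i1) = x" using k by (simp add: cudd_outcome_def)
    thus ?thesis using NE unfolding NEO_def by blast
  qed
  show ?thesis
  proof (cases "x \<in> set A \<and> M1 (set A) + m1 (set A) \<le> 2 * fst x \<and> M2 (set A) + m2 (set A) \<le> 2 * snd x")
    case True thus ?thesis using agree by blast
  next
    case False
    then obtain a b where ab: "x = mid a b" "a \<in> set A" "b \<in> set A" "fst a = M1 (set A)" "snd b = M2 (set A)"
      using assms(2) False unfolding F_def by blast
    obtain i where i: "i < ?n" "A!i = a" using ab by (auto simp: in_set_conv_nth)
    obtain j where j: "j < ?n" "A!j = b" using ab by (auto simp: in_set_conv_nth)
    show ?thesis
    proof (cases "i = j")
      case True
      hence "a = b" using i j by simp
      hence "x = a" using ab by (simp add: mid_def prod_eq_iff)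
      moreover have "m1 (set A) \<le> fst a" "m2 (set A) \<le> snd a"
        using bounds[OF fin ab(2)] by auto
      ultimately show ?thesis using agree[of a] ab `a = b` by simp
    next
      case False
      have NE: "is_pure_NE A (i,i) (j,j)"
        unfolding is_pure_NE_def
      proof (intro conjI ballI)
        show "(i,i) \<in> strategies A" "(j,j) \<in> strategies A" using i j by (auto simp: strategies_def)
      next
        fix t assume t: "t \<in> strategies A"
        obtain g d where gd: "t = (g,d)" "d < ?n" using t by (auto simp: strategies_def)
        have "fst (A!d) \<le> M1 (set A)" "fst (A!j) \<le> M1 (set A)"
          using bounds[OF fin inS[OF gd(2)]] bounds[OF fin inS[OF j(1)]] by auto
        note b = this
        have R: "fst (cudd_outcome A (i, i) (j, j)) = (M1 (set A) + fst (A!j)) / 2"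
          using False i ab by (simp add: cudd_outcome_def)
        show "fst (cudd_outcome A t (j, j)) \<le> fst (cudd_outcome A (i, i) (j, j))"
        proof (cases "g = j")
          case True
          hence "fst (cudd_outcome A t (j, j)) = fst (A!j)" using gd by (simp add: cudd_outcome_def)
          thus ?thesis using R hl3[OF b(2)] by simp
        next
          case False
          hence "fst (cudd_outcome A t (j, j)) = (fst (A!d) + fst (A!j)) / 2"
            using gd by (simp add: cudd_outcome_def)
          thus ?thesis using R hl4[OF b(1)] by simp
        qed
      next
        fix t assume t: "t \<in> strategies A"
        obtain g d where gd: "t = (g,d)" "d < ?n" using t by (auto simp: strategies_def)
        have "snd (A!d) \<le> M2 (set A)" "snd (A!i) \<le> M2 (set A)"
          using bounds[OF fin inS[OF gd(2)]] bounds[OF fin inS[OF i(1)]] by auto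
        note b = this
        have R: "snd (cudd_outcome A (i, i) (j, j)) = (snd (A!i) + M2 (set A)) / 2"
          using False j ab by (simp add: cudd_outcome_def)
        show "snd (cudd_outcome A (i, i) t) \<le> snd (cudd_outcome A (i, i) (j, j))"
        proof (cases "g = i")
          case True
          hence "snd (cudd_outcome A (i, i) t) = snd (A!i)" using gd by (simp add: cudd_outcome_def)
          thus ?thesis using R hl5[OF b(2)] by simp
        next
          case False
          hence "snd (cudd_outcome A (i, i) t) = (snd (A!i) + snd (A!d)) / 2"
            using gd by (simp add: cudd_outcome_def)
          thus ?thesis using R hl6[OF b(1)] by simp
        qed
      qed
      have "cudd_outcome A (i,i) (j,j) = x" using i j ab False by (simp add: cudd_outcome_def mid_def)
      thus ?thesis using NE unfolding NEO_def by blast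
    qed
  qed
qed

lemma NEO_eq: assumes "A \<noteq> []" shows "NEO A = F (set A)"
  using NEO_sub[OF assms] NEO_sup[OF assms] unfolding NEO_def by blast


lemma F_swap:
  assumes fin: "finite S" and sw: "\<And>x. x \<in> S \<Longrightarrow> swap_pair x \<in> S" and x: "x \<in> F S"
  shows "swap_pair x \<in> F S"
proof -
  have img: "fst ` S = snd ` S"
  proof
    show "fst ` S \<subseteq> snd ` S"
    proof
      fix y assume "y \<in> fst ` S" then obtain z where "z \<in> S" "y = fst z" by blast
      thus "y \<in> snd ` S" using sw[of z] by (force simp: swap_pair_def)
    qed
    show "snd ` S \<subseteq> fst ` S"
    proof
      fix y assume "y \<in> snd ` S" then obtain z where "z \<in> S" "y = snd z" by blast
      thus "y \<in> fst ` S" using sw[of z] by (force simp: swap_pair_def)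
    qed
  qed
  have e: "M1 S = M2 S" "m1 S = m2 S" unfolding M1_def M2_def m1_def m2_def using img by auto
  show ?thesis
  proof (cases "x \<in> S \<and> M1 S + m1 S \<le> 2 * fst x \<and> M2 S + m2 S \<le> 2 * snd x")
    case True
    have h1: "swap_pair x \<in> S" using True sw by blast
    have h2: "M1 S + m1 S \<le> 2 * fst (swap_pair x)" using True e by (simp add: swap_pair_def)
    have h3: "M2 S + m2 S \<le> 2 * snd (swap_pair x)" using True e by (simp add: swap_pair_def)
    show ?thesis using F_agree[OF h1 h2 h3] .
  next
    case False
    then obtain a b where ab: "x = mid a b" "a \<in> S" "b \<in> S" "fst a = M1 S" "snd b = M2 S"
      using x unfolding F_def by blast
    have "swap_pair x = mid (swap_pair b) (swap_pair a)" using ab by (simp add: mid_def swap_pair_def)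
    moreover have "fst (swap_pair b) = M1 S" "snd (swap_pair a) = M2 S" using ab e by (auto simp: swap_pair_def)
    ultimately show ?thesis using F_mid[OF sw[OF ab(3)] sw[OF ab(2)]] by simp
  qed
qed

lemma F_pareto:
  assumes fin: "finite S" and ne: "S \<noteq> {}"
  shows "\<exists>x\<in>F S. \<not> (\<exists>c\<in>S. fst c > fst x \<and> snd c > snd x)"
proof -
  define E where "E = {x\<in>S. M1 S + m1 S \<le> 2 * fst x \<and> M2 S + m2 S \<le> 2 * snd x}"
  have EF: "E \<subseteq> F S" unfolding E_def F_def by blast
  show ?thesis
  proof (cases "E = {}")
    case False
    have fE: "finite E" using fin unfolding E_def by simp
    let ?f = "\<lambda>y. fst y + snd y"
    have "Max (?f ` E) \<in> ?f ` E" using False fE by (intro Max_in) auto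
    then obtain x where x: "x \<in> E" "?f x = Max (?f ` E)" by auto
    have "\<not> (\<exists>c\<in>S. fst c > fst x \<and> snd c > snd x)"
    proof
      assume "\<exists>c\<in>S. fst c > fst x \<and> snd c > snd x"
      then obtain c where c: "c \<in> S" "fst c > fst x" "snd c > snd x" by blast
      hence "c \<in> E" using x(1) unfolding E_def by auto
      hence "?f c \<le> Max (?f ` E)" using fE by (intro Max_ge) auto
      thus False using c x by linarith
    qed
    thus ?thesis using x EF by blast
  next
    case True
    obtain a where a: "a \<in> S" "fst a = M1 S" using attained[OF fin ne] by blast
    obtain b where b: "b \<in> S" "snd b = M2 S" using attained[OF fin ne] by blast
    have pF: "mid a b \<in> F S" using F_mid[OF a(1) b(1) a(2) b(2)] .
    have "\<not> (\<exists>c\<in>S. fst c > fst (mid a b) \<and> snd c > snd (mid a b))"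
    proof
      assume "\<exists>c\<in>S. fst c > fst (mid a b) \<and> snd c > snd (mid a b)"
      then obtain c where c: "c \<in> S" "fst c > fst (mid a b)" "snd c > snd (mid a b)" by blast
      have "m1 S \<le> fst b" "m2 S \<le> snd a" using bounds[OF fin a(1)] bounds[OF fin b(1)] by auto
      hence "c \<in> E" using c a b unfolding E_def mid_def by auto
      thus False using True by blast
    qed
    thus ?thesis using pF by blast
  qed
qed

theorem corollary3:
  shows "mechanism_symmetric \<and> mechanism_IRA \<and> pareto_efficient_equilibrium_exists"
proof (intro conjI)
  show "mechanism_symmetric"
    unfolding mechanism_symmetric_def
  proof (intro allI impI ballI)
    fix A x assume A: "is_collection A \<and> symmetric_collection A" and x: "x \<in> NEO A"
    have ne: "A \<noteq> []" using A by (simp add: is_collection_def)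
    have sw: "swap_pair y \<in> set A" if "y \<in> set A" for y
    proof -
      obtain y1 y2 where y: "y = (y1,y2)" by fastforce
      have "count (mset A) (y1,y2) = count (mset A) (y2,y1)"
        using A by (simp add: symmetric_collection_def)
      thus ?thesis using that y proof -
        have "count (mset A) (y1,y2) \<noteq> 0" using that y by simp
        hence "count (mset A) (y2,y1) \<noteq> 0" using \<open>count (mset A) (y1,y2) = count (mset A) (y2,y1)\<close> by simp
        hence "(y2,y1) \<in> set A" by simp
        thus ?thesis using y by (simp add: swap_pair_def)
      qed
    qed
    show "swap_pair x \<in> NEO A" using F_swap[of "set A" x] sw x NEO_eq[OF ne] by auto
  qed
  show "mechanism_IRA"
    unfolding mechanism_IRA_def
  proof (intro allI impI)
    fix A j assume A: "is_collection A \<and> j < length A"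
    have ne: "A \<noteq> []" using A by (simp add: is_collection_def)
    have "set (A @ [A!j]) = set A" using A by auto
    thus "NEO A = NEO (A @ [A ! j])" using NEO_eq[OF ne] NEO_eq[of "A @ [A!j]"] by simp
  qed
  show "pareto_efficient_equilibrium_exists"
    unfolding pareto_efficient_equilibrium_exists_def pareto_efficient_def
  proof (intro allI impI)
    fix A assume A: "is_collection A"
    have ne: "A \<noteq> []" using A by (simp add: is_collection_def)
    show "\<exists>x\<in>NEO A. \<not> (\<exists>a\<in>set A. fst x < fst a \<and> snd x < snd a)"
      using F_pareto[of "set A"] ne NEO_eq[OF ne] by auto
  qed
qed

end
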